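(* Let $n\ge 3$, $m=3\binom{n}{2}+2\binom{n}{3}$ and $\mathbb{P}_n=\mathbb{Z}^{2n}\oplus\mathbb{F}_2^{m}$, whose elements are written $\overline{\alpha}=\big((\alpha_l)_{1\le l\le 2n};(\alpha^1_{ij})_{i<j};(\alpha^2_{ij})_{i<j};(\alpha^3_{ij})_{i<j};(\alpha^1_{ijk})_{i<j<k};(\alpha^2_{ijk})_{i<j<k}\big)$ with indices in $\{1,\dots,n\}$, $\alpha_l\in\mathbb{Z}$ and all other coordinates in $\mathbb{F}_2$. Define $\overline{\alpha}\cdot\overline{\beta}=\overline{\alpha}+\overline{\beta}+\overline{\tau}$, where $\overline{\tau}$ has its first $2n$ coordinates equal to $0$ and its other coordinates given modulo $2$ (integers reduced mod 2) by: for $i<j$, $\tau^1_{ij}=\alpha_j\beta_i$, $\tau^2_{ij}=\alpha_{j+n}\beta_{i+n}$, $\tau^3_{ij}=\alpha_{i+n}\beta_j+\alpha_{j+n}\beta_i$; for $i<j<k$, $\tau^1_{ijk}=\alpha^3_{ij}\beta_k+\alpha^3_{ik}\beta_j+\alpha^3_{jk}\beta_i+\alpha_{i+n}\beta_j\beta_k+\alpha_{j+n}\beta_i\beta_k+\alpha_{k+n}\beta_i\beta_j$, $\tau^2_{ijk}=\alpha^3_{ij}\beta_{k+n}+\alpha^3_{ik}\beta_{j+n}+\alpha^3_{jk}\beta_{i+n}+\alpha_{i+n}\alpha_{j+n}\beta_k+\alpha_{i+n}\alpha_{k+n}\beta_j+\alpha_{j+n}\alpha_{k+n}\beta_i+\alpha_{i+n}(\beta_j\beta_{k+n}+\beta_{j+n}\beta_k)+\alpha_{j+n}(\beta_i\beta_{k+n}+\beta_{i+n}\beta_k)+\alpha_{k+n}(\beta_i\beta_{j+n}+\beta_{i+n}\beta_j)$.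 Then $\mathbb{P}_n$ with this product is a group. *)

theory Defs
  imports Main "HOL-Algebra.Group"
begin

text \<open>Integer coordinates alpha_l (1 <= l <= 2n) are stored in pz; the F_2 coordinates
  alpha^1_ij, alpha^2_ij, alpha^3_ij (1 <= i < j <= n) in p1, p2, p3 and
  alpha^1_ijk, alpha^2_ijk (1 <= i < j < k <= n) in q1, q2, as integers in {0,1}
  (F_2 represented by residues mod 2).  Coordinates outside the index ranges are 0.\<close>

record pel =
  pz :: "nat \<Rightarrow> int"
  p1 :: "nat \<Rightarrow> nat \<Rightarrow> int"
  p2 :: "nat \<Rightarrow> nat \<Rightarrow> int"
  p3 :: "nat \<Rightarrow> nat \<Rightarrow> int"
  q1 :: "nat \<Rightarrow> nat \<Rightarrow> nat \<Rightarrow> int"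
  q2 :: "nat \<Rightarrow> nat \<Rightarrow> nat \<Rightarrow> int"

definition pair_idx :: "nat \<Rightarrow> nat \<Rightarrow> nat \<Rightarrow> bool" where
  "pair_idx n i j \<longleftrightarrow> 1 \<le> i \<and> i < j \<and> j \<le> n"

definition triple_idx :: "nat \<Rightarrow> nat \<Rightarrow> nat \<Rightarrow> nat \<Rightarrow> bool" where
  "triple_idx n i j k \<longleftrightarrow> 1 \<le> i \<and> i < j \<and> j < k \<and> k \<le> n"

definition Pn_carrier :: "nat \<Rightarrow> pel set" where
  "Pn_carrier n = {x.
     (\<forall>l. (l < 1 \<or> 2 * n < l) \<longrightarrow> pz x l = 0) \<and>
     (\<forall>i j. if pair_idx n i j then p1 x i j \<in> {0, 1} \<and> p2 x i j \<in> {0, 1} \<and> p3 x i j \<in> {0, 1}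
            else p1 x i j = 0 \<and> p2 x i j = 0 \<and> p3 x i j = 0) \<and>
     (\<forall>i j k. if triple_idx n i j k then q1 x i j k \<in> {0, 1} \<and> q2 x i j k \<in> {0, 1}
              else q1 x i j k = 0 \<and> q2 x i j k = 0)}"

definition Pn_mult :: "nat \<Rightarrow> pel \<Rightarrow> pel \<Rightarrow> pel" where
  "Pn_mult n x y =
    (let a = pz x; b = pz y in
     \<lparr> pz = (\<lambda>l. a l + b l),
       p1 = (\<lambda>i j. if pair_idx n i j then (p1 x i j + p1 y i j + a j * b i) mod 2 else 0),
       p2 = (\<lambda>i j. if pair_idx n i j then (p2 x i j + p2 y i j + a (j + n) * b (i + n)) mod 2 else 0),
       p3 = (\<lambda>i j. if pair_idx n i j then
               (p3 x i j + p3 y i j + a (i + n) * b j + a (j + n) * b i) mod 2 else 0),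
       q1 = (\<lambda>i j k. if triple_idx n i j k then
               (q1 x i j k + q1 y i j k
                + p3 x i j * b k + p3 x i k * b j + p3 x j k * b i
                + a (i + n) * b j * b k + a (j + n) * b i * b k + a (k + n) * b i * b j) mod 2
             else 0),
       q2 = (\<lambda>i j k. if triple_idx n i j k then
               (q2 x i j k + q2 y i j k
                + p3 x i j * b (k + n) + p3 x i k * b (j + n) + p3 x j k * b (i + n)
                + a (i + n) * a (j + n) * b k + a (i + n) * a (k + n) * b j
                + a (j + n) * a (k + n) * b i
                + a (i + n) * (b j * b (k + n) + b (j + n) * b k)
                + a (j + n) * (b i * b (k + n) + b (i + n) * b k)
                + a (k + n) * (b i * b (j + n) + b (i + n) * b j)) mod 2
             else 0) \<rparr>)"

definition Pn_zero :: pel where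
  "Pn_zero = \<lparr> pz = (\<lambda>_. 0), p1 = (\<lambda>_ _. 0), p2 = (\<lambda>_ _. 0), p3 = (\<lambda>_ _. 0),
               q1 = (\<lambda>_ _ _. 0), q2 = (\<lambda>_ _ _. 0) \<rparr>"

definition Pn_group :: "nat \<Rightarrow> pel monoid" where
  "Pn_group n = \<lparr> carrier = Pn_carrier n, mult = Pn_mult n, one = Pn_zero \<rparr>"

end

theory Submission
  imports Defs "HOL-Library.Z2"
begin

lemma of_int_mod2 [simp]: "(of_int (x mod 2) :: bit) = of_int x"
proof -
  have "x = x mod 2 + 2 * (x div 2)" by simp
  then have "(of_int x :: bit) = of_int (x mod 2) + 2 * of_int (x div 2)"
    by (metis of_int_add of_int_mult of_int_numeral)
  then show ?thesis by simp
qed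

lemma bit_mod2I: assumes "(of_int x :: bit) = of_int y" shows "x mod 2 = y mod 2"
proof -
  have "(of_int (x mod 2) :: bit) = of_int (y mod 2)" using assms by simp
  moreover have "x mod 2 = 0 \<or> x mod 2 = 1" "y mod 2 = 0 \<or> y mod 2 = 1" by auto
  ultimately show ?thesis by (auto simp del: of_int_mod2 add_bit_eq_xor mult_bit_eq_and)
qed

lemma assoc: "Pn_mult n (Pn_mult n x y) z = Pn_mult n x (Pn_mult n y z)"
proof (rule pel.equality)
  show "pz (Pn_mult n (Pn_mult n x y) z) = pz (Pn_mult n x (Pn_mult n y z))"
    by (simp add: Pn_mult_def Let_def add.assoc)
  show "pel.more (Pn_mult n (Pn_mult n x y) z) = pel.more (Pn_mult n x (Pn_mult n y z))"
    by (simp add: Pn_mult_def Let_def)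
  show "p1 (Pn_mult n (Pn_mult n x y) z) = p1 (Pn_mult n x (Pn_mult n y z))"
  proof (rule ext)+
    fix i j
    show "p1 (Pn_mult n (Pn_mult n x y) z) i j = p1 (Pn_mult n x (Pn_mult n y z)) i j"
      unfolding Pn_mult_def Let_def
      apply simp
      apply (intro impI bit_mod2I)
      apply (simp del: add_bit_eq_xor mult_bit_eq_and add: algebra_simps)
      done
  qed
  show "p2 (Pn_mult n (Pn_mult n x y) z) = p2 (Pn_mult n x (Pn_mult n y z))"
  proof (rule ext)+
    fix i j
    show "p2 (Pn_mult n (Pn_mult n x y) z) i j = p2 (Pn_mult n x (Pn_mult n y z)) i j"
      unfolding Pn_mult_def Let_def
      apply simp
      apply (intro impI bit_mod2I)
      apply (simp del: add_bit_eq_xor mult_bit_eq_and add: algebra_simps)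
      done
  qed
  show "p3 (Pn_mult n (Pn_mult n x y) z) = p3 (Pn_mult n x (Pn_mult n y z))"
  proof (rule ext)+
    fix i j
    show "p3 (Pn_mult n (Pn_mult n x y) z) i j = p3 (Pn_mult n x (Pn_mult n y z)) i j"
      unfolding Pn_mult_def Let_def
      apply simp
      apply (intro impI bit_mod2I)
      apply (simp del: add_bit_eq_xor mult_bit_eq_and add: algebra_simps)
      done
  qed
  show "q1 (Pn_mult n (Pn_mult n x y) z) = q1 (Pn_mult n x (Pn_mult n y z))"
  proof (rule ext)+
    fix i j k
    show "q1 (Pn_mult n (Pn_mult n x y) z) i j k = q1 (Pn_mult n x (Pn_mult n y z)) i j k"
    proof (cases "triple_idx n i j k")
      case True
      then have "pair_idx n i j" "pair_idx n i k" "pair_idx n j k" by (auto simp: triple_idx_def pair_idx_def)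
      with True show ?thesis unfolding Pn_mult_def Let_def
        apply simp
        apply (rule bit_mod2I)
        apply (simp del: add_bit_eq_xor mult_bit_eq_and add: algebra_simps)
        done
    qed (simp add: Pn_mult_def Let_def)
  qed
  show "q2 (Pn_mult n (Pn_mult n x y) z) = q2 (Pn_mult n x (Pn_mult n y z))"
  proof (rule ext)+
    fix i j k
    show "q2 (Pn_mult n (Pn_mult n x y) z) i j k = q2 (Pn_mult n x (Pn_mult n y z)) i j k"
    proof (cases "triple_idx n i j k")
      case True
      then have "pair_idx n i j" "pair_idx n i k" "pair_idx n j k" by (auto simp: triple_idx_def pair_idx_def)
      with True show ?thesis unfolding Pn_mult_def Let_def
        apply simp
        apply (rule bit_mod2I)
        apply (simp del: add_bit_eq_xor mult_bit_eq_and add: algebra_simps)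
        done
    qed (simp add: Pn_mult_def Let_def)
  qed
qed

definition Pn_inv :: "nat \<Rightarrow> pel \<Rightarrow> pel" where
  "Pn_inv n x =
    (let a = pz x; P3 = (\<lambda>i j. p3 x i j + a (i + n) * a j + a (j + n) * a i) in
     \<lparr> pz = (\<lambda>l. - a l),
       p1 = (\<lambda>i j. if pair_idx n i j then (p1 x i j + a j * a i) mod 2 else 0),
       p2 = (\<lambda>i j. if pair_idx n i j then (p2 x i j + a (j + n) * a (i + n)) mod 2 else 0),
       p3 = (\<lambda>i j. if pair_idx n i j then P3 i j mod 2 else 0),
       q1 = (\<lambda>i j k. if triple_idx n i j k then
               (q1 x i j k
                + P3 i j * a k + P3 i k * a j + P3 j k * a i
                + a (i + n) * a j * a k + a (j + n) * a i * a k + a (k + n) * a i * a j) mod 2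
             else 0),
       q2 = (\<lambda>i j k. if triple_idx n i j k then
               (q2 x i j k
                + P3 i j * a (k + n) + P3 i k * a (j + n) + P3 j k * a (i + n)
                + a (i + n) * a (j + n) * a k + a (i + n) * a (k + n) * a j
                + a (j + n) * a (k + n) * a i
                + a (i + n) * (a j * a (k + n) + a (j + n) * a k)
                + a (j + n) * (a i * a (k + n) + a (i + n) * a k)
                + a (k + n) * (a i * a (j + n) + a (i + n) * a j)) mod 2
             else 0) \<rparr>)"

lemma mod2_in: "(x::int) mod 2 \<in> {0, 1}"
  by auto

lemma carrier_pz: "x \<in> Pn_carrier n \<Longrightarrow> (l < 1 \<or> 2 * n < l) \<Longrightarrow> pz x l = 0"
  unfolding Pn_carrier_def by auto

lemma carrier_pairs: "x \<in> Pn_carrier n \<Longrightarrow>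
    (if pair_idx n i j then p1 x i j \<in> {0, 1} \<and> p2 x i j \<in> {0, 1} \<and> p3 x i j \<in> {0, 1}
     else p1 x i j = 0 \<and> p2 x i j = 0 \<and> p3 x i j = 0)"
  unfolding Pn_carrier_def by blast

lemma carrier_triples: "x \<in> Pn_carrier n \<Longrightarrow>
    (if triple_idx n i j k then q1 x i j k \<in> {0, 1} \<and> q2 x i j k \<in> {0, 1}
     else q1 x i j k = 0 \<and> q2 x i j k = 0)"
  unfolding Pn_carrier_def by blast

lemma mod2_id: "(v::int) \<in> {0, 1} \<Longrightarrow> v mod 2 = v"
  by auto

lemma mult_closed: "x \<in> Pn_carrier n \<Longrightarrow> y \<in> Pn_carrier n \<Longrightarrow> Pn_mult n x y \<in> Pn_carrier n"
  unfolding Pn_carrier_def[of n] mem_Collect_eq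
  by (auto simp: Pn_mult_def Let_def mod2_in)

lemma inv_closed: "x \<in> Pn_carrier n \<Longrightarrow> Pn_inv n x \<in> Pn_carrier n"
  unfolding Pn_carrier_def[of n] mem_Collect_eq
  by (auto simp: Pn_inv_def Let_def mod2_in)

lemma zero_closed: "Pn_zero \<in> Pn_carrier n"
  unfolding Pn_carrier_def Pn_zero_def by auto

lemma l_one: assumes "x \<in> Pn_carrier n" shows "Pn_mult n Pn_zero x = x"
proof (rule pel.equality)
  show "pz (Pn_mult n Pn_zero x) = pz x" by (simp add: Pn_mult_def Pn_zero_def Let_def)
  show "pel.more (Pn_mult n Pn_zero x) = pel.more x" by (simp add: Pn_mult_def Pn_zero_def Let_def)
  have P: "(pair_idx n i j \<longrightarrow> p1 x i j mod 2 = p1 x i j \<and> p2 x i j mod 2 = p2 x i j \<and> p3 x i j mod 2 = p3 x i j) \<and>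
      (\<not> pair_idx n i j \<longrightarrow> p1 x i j = 0 \<and> p2 x i j = 0 \<and> p3 x i j = 0)" for i j
    using carrier_pairs[OF assms, of i j] by (cases "pair_idx n i j") (auto simp: mod2_id)
  have Q: "(triple_idx n i j k \<longrightarrow> q1 x i j k mod 2 = q1 x i j k \<and> q2 x i j k mod 2 = q2 x i j k) \<and>
      (\<not> triple_idx n i j k \<longrightarrow> q1 x i j k = 0 \<and> q2 x i j k = 0)" for i j k
    using carrier_triples[OF assms, of i j k] by (cases "triple_idx n i j k") (auto simp: mod2_id)
  show "p1 (Pn_mult n Pn_zero x) = p1 x" "p2 (Pn_mult n Pn_zero x) = p2 x"
    "p3 (Pn_mult n Pn_zero x) = p3 x"
    by (intro ext; simp add: Pn_mult_def Pn_zero_def Let_def P)+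
  show "q1 (Pn_mult n Pn_zero x) = q1 x" "q2 (Pn_mult n Pn_zero x) = q2 x"
    by (intro ext; simp add: Pn_mult_def Pn_zero_def Let_def Q)+
qed

lemma l_inv: "Pn_mult n (Pn_inv n x) x = Pn_zero"
proof (rule pel.equality)
  show "pz (Pn_mult n (Pn_inv n x) x) = pz Pn_zero"
    by (simp add: Pn_mult_def Pn_inv_def Pn_zero_def Let_def)
  show "pel.more (Pn_mult n (Pn_inv n x) x) = pel.more Pn_zero"
    by (simp add: Pn_mult_def Pn_inv_def Pn_zero_def Let_def)
  show "p1 (Pn_mult n (Pn_inv n x) x) = p1 Pn_zero" "p2 (Pn_mult n (Pn_inv n x) x) = p2 Pn_zero"
    "p3 (Pn_mult n (Pn_inv n x) x) = p3 Pn_zero"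
    unfolding Pn_mult_def Pn_inv_def Pn_zero_def Let_def
    by (auto intro!: ext bit_mod2I[where y = 0, simplified]
          simp del: add_bit_eq_xor mult_bit_eq_and simp add: algebra_simps)
  show "q1 (Pn_mult n (Pn_inv n x) x) = q1 Pn_zero"
  proof (rule ext)+
    fix i j k
    show "q1 (Pn_mult n (Pn_inv n x) x) i j k = q1 Pn_zero i j k"
    proof (cases "triple_idx n i j k")
      case True
      then have "pair_idx n i j" "pair_idx n i k" "pair_idx n j k" by (auto simp: triple_idx_def pair_idx_def)
      with True show ?thesis unfolding Pn_mult_def Pn_inv_def Pn_zero_def Let_def
        apply simp
        apply (rule bit_mod2I[where y = 0, simplified])
        apply (simp del: add_bit_eq_xor mult_bit_eq_and add: algebra_simps)
        done
    qed (simp add: Pn_mult_def Pn_zero_def Let_def)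
  qed
  show "q2 (Pn_mult n (Pn_inv n x) x) = q2 Pn_zero"
  proof (rule ext)+
    fix i j k
    show "q2 (Pn_mult n (Pn_inv n x) x) i j k = q2 Pn_zero i j k"
    proof (cases "triple_idx n i j k")
      case True
      then have "pair_idx n i j" "pair_idx n i k" "pair_idx n j k" by (auto simp: triple_idx_def pair_idx_def)
      with True show ?thesis unfolding Pn_mult_def Pn_inv_def Pn_zero_def Let_def
        apply simp
        apply (rule bit_mod2I[where y = 0, simplified])
        apply (simp del: add_bit_eq_xor mult_bit_eq_and add: algebra_simps)
        done
    qed (simp add: Pn_mult_def Pn_zero_def Let_def)
  qed
qed

theorem proposition2p5:
  fixes n :: nat
  assumes "n \<ge> 3"
  shows "group (Pn_group n)"
proof (rule groupI)
  fix x y z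
  show "x \<in> carrier (Pn_group n) \<Longrightarrow> y \<in> carrier (Pn_group n) \<Longrightarrow>
      x \<otimes>\<^bsub>Pn_group n\<^esub> y \<in> carrier (Pn_group n)"
    by (simp add: Pn_group_def mult_closed)
  show "x \<otimes>\<^bsub>Pn_group n\<^esub> y \<otimes>\<^bsub>Pn_group n\<^esub> z =
      x \<otimes>\<^bsub>Pn_group n\<^esub> (y \<otimes>\<^bsub>Pn_group n\<^esub> z)"
    by (simp add: Pn_group_def assoc)
next
  show "\<one>\<^bsub>Pn_group n\<^esub> \<in> carrier (Pn_group n)"
    by (simp add: Pn_group_def zero_closed)
next
  fix x
  assume "x \<in> carrier (Pn_group n)"
  then show "\<one>\<^bsub>Pn_group n\<^esub> \<otimes>\<^bsub>Pn_group n\<^esub> x = x"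
    by (simp add: Pn_group_def l_one)
next
  fix x
  assume "x \<in> carrier (Pn_group n)"
  then show "\<exists>y \<in> carrier (Pn_group n). y \<otimes>\<^bsub>Pn_group n\<^esub> x = \<one>\<^bsub>Pn_group n\<^esub>"
    by (intro bexI[of _ "Pn_inv n x"]) (simp_all add: Pn_group_def l_inv inv_closed)
qed

end
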